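(* There exist constants $\overline C>0$ and $0<\overline\theta<1$ such that for all $n\geq1$, all $j\in\{1,\dots,2p\}$, all $z\in\mathcal D_j$ and all $\alpha\neq\beta\in\mathscr W_n^j$, $$|\gamma_\alpha(z)-\gamma_\beta(z)|\geq\overline C\,\overline\theta^{\,r(\alpha,\beta)},$$ where $r(\alpha,\beta)=\max\{0\leq i\leq n:\ \alpha_k=\beta_k\text{ for all }k\leq i\}$.
   Context: Schottky setup: $\Gamma\subset PSL_2(\mathbb Z)$ is a non-elementary convex co-compact subgroup realized as a Schottky group: there are open Euclidean discs $\mathcal D_1,\dots,\mathcal D_{2p}\subset\mathbb C$ with centers on $\mathbb R$ and pairwise disjoint closures, and matrices $\gamma_1,\dots,\gamma_p\in SL_2(\mathbb Z)$ acting as Möbius maps with $\gamma_i(\mathcal D_i)=\widehat{\mathbb C}\setminus\overline{\mathcal D_{p+i}}$; $\Gamma$ is the free group they generate. Put $\gamma_{p+i}=\gamma_i^{-1}$ (indices mod $2p$); then $\gamma_i(\mathcal D_j)\subset\mathcal D_{p+i}$ for $j\neq i$. Let $\mathscr W_n$ be the set of $\alpha=(\alpha_1,\dots,\alpha_n)\in\{1,\dots,2p\}^n$ with $\alpha_{i+1}\neq\alpha_i+p\pmod{2p}$ for all $i$, $\mathscr W_n^j=\{\alpha\in\mathscr W_n:\alpha_n\neq j\}$, and $\gamma_\alpha=\gamma_{\alpha_1}\circ\cdots\circ\gamma_{\alpha_n}$; for $\alpha\in\mathscr W_n^j$, $\gamma_\alpha(\overline{\mathcal D_j})\subset\mathcal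 D_{p+\alpha_1}$. *)

theory Defs
  imports "HOL-Analysis.Analysis"
begin

text \<open>Integer 2x2 matrices (a,b,c,d) = [[a,b],[c,d]].\<close>
type_synonym imat = "int \<times> int \<times> int \<times> int"

definition in_SL2Z :: "imat \<Rightarrow> bool" where
  "in_SL2Z M = (case M of (a,b,c,d) \<Rightarrow> a*d - b*c = 1)"

definition mat_inv :: "imat \<Rightarrow> imat" where
  "mat_inv M = (case M of (a,b,c,d) \<Rightarrow> (d, -b, -c, a))"

text \<open>Moebius action on the Riemann sphere, modelled as complex option (None = infinity).\<close>
definition moeb :: "imat \<Rightarrow> complex option \<Rightarrow> complex option" where
  "moeb M w = (case M of (a,b,c,d) \<Rightarrow>
     (case w of
        None \<Rightarrow> (if c = 0 then None else Some (of_int a / of_int c))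
      | Some z \<Rightarrow> (if of_int c * z + of_int d = 0 then None
                   else Some ((of_int a * z + of_int b) / (of_int c * z + of_int d)))))"

text \<open>Index i+p mod 2p, with representatives in {1..2p}.\<close>
definition opp :: "nat \<Rightarrow> nat \<Rightarrow> nat" where
  "opp p i = (if i \<le> p then i + p else i - p)"

definition gam :: "nat \<Rightarrow> (nat \<Rightarrow> imat) \<Rightarrow> nat \<Rightarrow> imat" where
  "gam p g i = (if i \<le> p then g i else mat_inv (g (i - p)))"

definition disc :: "(nat \<Rightarrow> real) \<Rightarrow> (nat \<Rightarrow> real) \<Rightarrow> nat \<Rightarrow> complex set" where
  "disc cen rad i = ball (complex_of_real (cen i)) (rad i)"

definition schottky_setup ::
  "nat \<Rightarrow> (nat \<Rightarrow> imat) \<Rightarrow> (nat \<Rightarrow> real) \<Rightarrow> (nat \<Rightarrow> real) \<Rightarrow> bool" where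
  "schottky_setup p g cen rad \<longleftrightarrow>
     p \<ge> 2 \<and>
     (\<forall>i\<in>{1..2*p}. rad i > 0) \<and>
     (\<forall>i\<in>{1..2*p}. \<forall>k\<in>{1..2*p}. i \<noteq> k \<longrightarrow>
         closure (disc cen rad i) \<inter> closure (disc cen rad k) = {}) \<and>
     (\<forall>i\<in>{1..p}. in_SL2Z (g i)) \<and>
     (\<forall>i\<in>{1..p}. moeb (g i) ` (Some ` disc cen rad i)
                   = UNIV - Some ` closure (disc cen rad (p + i)))"

definition words :: "nat \<Rightarrow> nat \<Rightarrow> nat list set" where
  "words p n = {al. length al = n \<and> (\<forall>i<n. al ! i \<in> {1..2*p}) \<and>
                    (\<forall>i. Suc i < n \<longrightarrow> al ! Suc i \<noteq> opp p (al ! i))}"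

definition words_j :: "nat \<Rightarrow> nat \<Rightarrow> nat \<Rightarrow> nat list set" where
  "words_j p n j = {al \<in> words p n. al ! (n - 1) \<noteq> j}"

definition word_act :: "nat \<Rightarrow> (nat \<Rightarrow> imat) \<Rightarrow> nat list \<Rightarrow> complex option \<Rightarrow> complex option" where
  "word_act p g al = foldr (\<lambda>i f. moeb (gam p g i) \<circ> f) al id"

text \<open>r(alpha,beta) = max{0 \<le> i \<le> n : alpha_k = beta_k for all k \<le> i} (1-indexed).\<close>
definition rr :: "nat list \<Rightarrow> nat list \<Rightarrow> nat" where
  "rr al be = Max {i. i \<le> length al \<and> (\<forall>k<i. al ! k = be ! k)}"

end

theory Submission
  imports Defs
begin

lemma moeb_inv:
  assumes "in_SL2Z M" shows "moeb (mat_inv M) (moeb M w) = w"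
proof -
  obtain a b c d where M: "M = (a,b,c,d)" by (cases M) auto
  have det: "a*d - b*c = 1" using assms M by (simp add: in_SL2Z_def)
  hence detc: "of_int a * of_int d - of_int b * of_int c = (1::complex)"
    by (metis of_int_1 of_int_diff of_int_mult)
  show ?thesis
  proof (cases w)
    case None
    show ?thesis
    proof (cases "c = 0")
      case True thus ?thesis using None M by (simp add: moeb_def mat_inv_def)
    next
      case False
      hence "of_int c \<noteq> (0::complex)" by simp
      hence "- (of_int c * (of_int a / of_int c)) + of_int a = (0::complex)" by (simp add: field_simps)
      thus ?thesis using None M False by (simp add: moeb_def mat_inv_def)
    qed
  next
    case (Some z)
    show ?thesis
    proof (cases "of_int c * z + of_int d = 0")
      case True
      have c0: "c \<noteq> 0" proof assume "c = 0" then have "d = 0" using True by simp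
         then show False using det \<open>c = 0\<close> by simp qed
      hence c0': "of_int c \<noteq> (0::complex)" by simp
      have "z = - of_int d / of_int c" using True c0' by (simp add: field_simps add_eq_0_iff)
      then show ?thesis using Some M True c0 c0' by (simp add: moeb_def mat_inv_def)
    next
      case False
      let ?q = "of_int c * z + of_int d"
      let ?w = "(of_int a * z + of_int b) / ?q"
      have e1: "of_int (-c) * ?w + of_int a = 1 / ?q"
        using False detc by (simp add: field_simps; simp add: algebra_simps)
      have e2: "of_int d * ?w + of_int (-b) = z / ?q"
        using False detc by (simp add: field_simps; simp add: algebra_simps)
      have ne: "1 / ?q \<noteq> 0" using False by simp
      have e3: "(z / ?q) / (1 / ?q) = z" using False by simp
      have m1: "moeb M w = Some ?w" using Some M False by (simp add: moeb_def)
      have m2: "moeb (mat_inv M) (Some ?w) = (if of_int (-c) * ?w + of_int a = 0 then None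
         else Some ((of_int d * ?w + of_int (-b)) / (of_int (-c) * ?w + of_int a)))"
        unfolding moeb_def mat_inv_def M by (simp only: prod.case option.case)
      show ?thesis unfolding m1 m2 e1 e2 e3 using ne Some by simp
    qed
  qed
qed

lemma moeb_diff:
  assumes "in_SL2Z (a,b,c,d)" "moeb (a,b,c,d) (Some u) = Some u'" "moeb (a,b,c,d) (Some v) = Some v'"
  shows "cmod (u - v) = cmod (u' - v') * cmod (of_int c * u + of_int d) * cmod (of_int c * v + of_int d)"
proof -
  have det: "a*d - b*c = 1" using assms by (simp add: in_SL2Z_def)
  hence detc: "of_int a * of_int d - of_int b * of_int c = (1::complex)"
    by (metis of_int_1 of_int_diff of_int_mult)
  have nu: "of_int c * u + of_int d \<noteq> 0" using assms(2) by (auto simp: moeb_def split: if_splits)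
  have nv: "of_int c * v + of_int d \<noteq> 0" using assms(3) by (auto simp: moeb_def split: if_splits)
  have u': "u' = (of_int a * u + of_int b) / (of_int c * u + of_int d)" using assms(2) nu by (simp add: moeb_def)
  have v': "v' = (of_int a * v + of_int b) / (of_int c * v + of_int d)" using assms(3) nv by (simp add: moeb_def)
  have "u' - v' = (u - v) / ((of_int c * u + of_int d) * (of_int c * v + of_int d))"
    unfolding u' v' using nu nv detc by (simp add: field_simps; simp add: algebra_simps)
  moreover have "(of_int c * u + of_int d) * (of_int c * v + of_int d) \<noteq> 0" using nu nv by simp
  ultimately have "u - v = (u' - v') * ((of_int c * u + of_int d) * (of_int c * v + of_int d))"
    by (simp add: eq_divide_eq)
  thus ?thesis by (simp add: norm_mult)
qed

definition red :: "nat \<Rightarrow> nat list \<Rightarrow> bool" where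
  "red p w = ((\<forall>i<length w. w!i \<in> {1..2*p}) \<and> (\<forall>i. Suc i < length w \<longrightarrow> w!Suc i \<noteq> opp p (w!i)))"

lemma red_Nil[simp]: "red p []" by (simp add: red_def)

lemma red_Cons: "red p (x#w) \<longleftrightarrow> x \<in> {1..2*p} \<and> red p w \<and> (w \<noteq> [] \<longrightarrow> hd w \<noteq> opp p x)"
proof
  assume r: "red p (x#w)"
  have "x \<in> {1..2*p}" using r unfolding red_def by (metis length_Cons nth_Cons_0 zero_less_Suc)
  moreover have "red p w" using r unfolding red_def
    by (metis Suc_less_eq length_Cons nth_Cons_Suc)
  moreover have "w \<noteq> [] \<longrightarrow> hd w \<noteq> opp p x" using r unfolding red_def
    by (metis hd_conv_nth length_Cons length_greater_0_conv nth_Cons_0 nth_Cons_Suc Suc_less_eq)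
  ultimately show "x \<in> {1..2*p} \<and> red p w \<and> (w \<noteq> [] \<longrightarrow> hd w \<noteq> opp p x)" by blast
next
  assume r: "x \<in> {1..2*p} \<and> red p w \<and> (w \<noteq> [] \<longrightarrow> hd w \<noteq> opp p x)"
  show "red p (x#w)" unfolding red_def
  proof (intro conjI allI impI)
    fix i assume "i < length (x#w)" thus "(x#w)!i \<in> {1..2*p}" using r
      by (cases i) (auto simp: red_def)
  next
    fix i assume i: "Suc i < length (x#w)"
    show "(x#w)!Suc i \<noteq> opp p ((x#w)!i)"
    proof (cases i)
      case 0 thus ?thesis using r i by (auto simp: hd_conv_nth)
    next
      case (Suc m) thus ?thesis using r i by (auto simp: red_def)
    qed
  qed
qed

lemma red_append: "red p (xs @ ys) \<Longrightarrow> red p xs \<and> red p ys"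
  by (induction xs) (auto simp: red_Cons)

lemma words_red: "al \<in> words p n \<Longrightarrow> red p al \<and> length al = n"
  by (simp add: words_def red_def)

lemma opp_range: "x \<in> {1..2*p} \<Longrightarrow> opp p x \<in> {1..2*p}" by (auto simp: opp_def)
lemma opp_opp: "x \<in> {1..2*p} \<Longrightarrow> opp p (opp p x) = x" by (auto simp: opp_def)
lemma opp_inj: "x \<in> {1..2*p} \<Longrightarrow> y \<in> {1..2*p} \<Longrightarrow> opp p x = opp p y \<Longrightarrow> x = y"
  by (metis opp_opp)

lemma word_act_Nil[simp]: "word_act p g [] = id" by (simp add: word_act_def)
lemma word_act_Cons[simp]: "word_act p g (x#w) = moeb (gam p g x) \<circ> word_act p g w"
  by (simp add: word_act_def)
lemma word_act_append: "word_act p g (w @ v) = word_act p g w \<circ> word_act p g v"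
  by (induction w) auto

lemma SL_inv: "in_SL2Z M \<Longrightarrow> in_SL2Z (mat_inv M)"
  by (cases M) (simp add: in_SL2Z_def mat_inv_def algebra_simps)

definition ent :: "imat \<Rightarrow> real" where
  "ent M = (case M of (a,b,c,d) \<Rightarrow> \<bar>a\<bar> + \<bar>b\<bar> + \<bar>c\<bar> + \<bar>d\<bar>)"

lemma ent_inv: "ent (mat_inv M) = ent M" by (cases M) (simp add: ent_def mat_inv_def)
lemma ent_nonneg: "ent M \<ge> 0" by (cases M) (simp add: ent_def)

context
  fixes p :: nat and g :: "nat \<Rightarrow> imat" and cen rad :: "nat \<Rightarrow> real"
  assumes S: "schottky_setup p g cen rad"
begin

lemma rad_pos: "i \<in> {1..2*p} \<Longrightarrow> rad i > 0" using S by (simp add: schottky_setup_def)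

lemma cl_disc: "i \<in> {1..2*p} \<Longrightarrow> closure (disc cen rad i) = cball (cen i) (rad i)"
  using rad_pos by (simp add: disc_def)

lemma disj: "i \<in> {1..2*p} \<Longrightarrow> k \<in> {1..2*p} \<Longrightarrow> i \<noteq> k \<Longrightarrow>
   closure (disc cen rad i) \<inter> closure (disc cen rad k) = {}"
  using S by (simp add: schottky_setup_def)

lemma gam_SL: "x \<in> {1..2*p} \<Longrightarrow> in_SL2Z (gam p g x)"
proof -
  assume x: "x \<in> {1..2*p}"
  have "\<forall>i\<in>{1..p}. in_SL2Z (g i)" using S by (simp add: schottky_setup_def)
  moreover have "\<not> x \<le> p \<Longrightarrow> x - p \<in> {1..p}" using x by auto
  ultimately show ?thesis using x by (auto simp: gam_def intro!: SL_inv)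
qed

lemma step:
  assumes x: "x \<in> {1..2*p}" and k: "k \<in> {1..2*p}" "k \<noteq> x" and u: "u \<in> closure (disc cen rad k)"
  shows "\<exists>u'. moeb (gam p g x) (Some u) = Some u' \<and> u' \<in> closure (disc cen rad (opp p x))"
proof (cases "x \<le> p")
  case True
  hence x1: "x \<in> {1..p}" using x by auto
  have img: "moeb (g x) ` (Some ` disc cen rad x) = UNIV - Some ` closure (disc cen rad (p + x))"
    using S x1 by (simp add: schottky_setup_def)
  have SL: "in_SL2Z (g x)" using S x1 by (simp add: schottky_setup_def)
  have un: "u \<notin> disc cen rad x" using disj[OF k(1) x k(2)] u closure_subset by blast
  have "moeb (g x) (Some u) \<in> Some ` closure (disc cen rad (p + x))"
  proof (rule ccontr)
    assume "moeb (g x) (Some u) \<notin> Some ` closure (disc cen rad (p + x))"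
    hence "moeb (g x) (Some u) \<in> moeb (g x) ` (Some ` disc cen rad x)" using img by blast
    then obtain y where y: "y \<in> disc cen rad x" "moeb (g x) (Some u) = moeb (g x) (Some y)" by auto
    have "moeb (mat_inv (g x)) (moeb (g x) (Some u)) = moeb (mat_inv (g x)) (moeb (g x) (Some y))"
      using y(2) by (rule arg_cong)
    hence "Some u = Some y" unfolding moeb_inv[OF SL] .
    thus False using y(1) un by simp
  qed
  moreover have "opp p x = p + x" using True by (simp add: opp_def)
  ultimately show ?thesis using True by (auto simp: gam_def)
next
  case False
  define i where "i = x - p"
  have i1: "i \<in> {1..p}" using x False by (auto simp: i_def)
  have xi: "x = p + i" using False by (simp add: i_def)
  have img: "moeb (g i) ` (Some ` disc cen rad i) = UNIV - Some ` closure (disc cen rad x)"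
    using S i1 xi by (simp add: schottky_setup_def)
  have SL: "in_SL2Z (g i)" using S i1 by (simp add: schottky_setup_def)
  have "u \<notin> closure (disc cen rad x)" using disj[OF k(1) x k(2)] u by blast
  hence "Some u \<in> moeb (g i) ` (Some ` disc cen rad i)" using img by blast
  then obtain y where y: "y \<in> disc cen rad i" "Some u = moeb (g i) (Some y)" by auto
  have gx: "gam p g x = mat_inv (g i)" using False by (simp add: gam_def i_def)
  have "moeb (gam p g x) (Some u) = Some y"
    unfolding gx y(2) by (rule moeb_inv[OF SL])
  moreover have "opp p x = i" using False by (simp add: opp_def i_def)
  ultimately show ?thesis using y(1) closure_subset by blast
qed

definition "Rb = (\<Sum>k\<in>{1..2*p}. \<bar>cen k\<bar> + rad k)"
definition "Kb = (\<Sum>i\<in>{1..p}. ent (g i))"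
definition "Bb = (Kb * (Rb + 1))^2 + 2"

lemma term_nonneg: "k \<in> {1..2*p} \<Longrightarrow> 0 \<le> \<bar>cen k\<bar> + rad k"
  using rad_pos[of k] abs_ge_zero[of "cen k"] by linarith

lemma Rb_bound: assumes "k \<in> {1..2*p}" "u \<in> closure (disc cen rad k)" shows "cmod u \<le> Rb"
proof -
  have "cmod u \<le> cmod (complex_of_real (cen k)) + rad k"
    using assms cl_disc[OF assms(1)] norm_triangle_ineq2[of u "complex_of_real (cen k)"]
    by (auto simp: dist_norm norm_minus_commute)
  also have "\<dots> = \<bar>cen k\<bar> + rad k" by simp
  also have "\<dots> \<le> Rb" unfolding Rb_def
    by (rule member_le_sum[OF assms(1)]) (use term_nonneg in auto)
  finally show ?thesis .
qed

lemma Rb_nonneg: "Rb \<ge> 0" unfolding Rb_def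
  by (rule sum_nonneg) (use term_nonneg in auto)

lemma Kb_nonneg: "Kb \<ge> 0" unfolding Kb_def by (rule sum_nonneg) (rule ent_nonneg)

lemma Kb_bound: assumes "x \<in> {1..2*p}" shows "ent (gam p g x) \<le> Kb"
proof -
  have "ent (gam p g x) = ent (g (if x \<le> p then x else x - p))" by (simp add: gam_def ent_inv)
  also have "\<dots> \<le> Kb" unfolding Kb_def
    by (rule member_le_sum) (use assms in \<open>auto intro: ent_nonneg\<close>)
  finally show ?thesis .
qed

lemma lin_bound: assumes "x \<in> {1..2*p}" "gam p g x = (a,b,c,d)" "cmod u \<le> Rb"
  shows "cmod (of_int c * u + of_int d) \<le> Kb * (Rb + 1)"
proof -
  have e: "\<bar>real_of_int c\<bar> \<le> Kb" "\<bar>real_of_int d\<bar> \<le> Kb"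
    using Kb_bound[OF assms(1)] assms(2) by (auto simp: ent_def)
  have "cmod (of_int c * u + of_int d) \<le> \<bar>real_of_int c\<bar> * cmod u + \<bar>real_of_int d\<bar>"
    using norm_triangle_ineq[of "of_int c * u" "of_int d"] by (simp add: norm_mult)
  also have "\<dots> \<le> Kb * Rb + Kb"
    using e assms(3) by (intro add_mono mult_mono) auto
  finally show ?thesis by (simp add: algebra_simps)
qed

lemma Bb_gt1: "Bb > 1" unfolding Bb_def by (simp add: add_pos_nonneg)

lemma one_step_dist:
  assumes x: "x \<in> {1..2*p}" and k: "k \<in> {1..2*p}" and l: "l \<in> {1..2*p}"
    and u: "u \<in> closure (disc cen rad k)" and v: "v \<in> closure (disc cen rad l)"
    and mu: "moeb (gam p g x) (Some u) = Some u'" and mv: "moeb (gam p g x) (Some v) = Some v'"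
  shows "cmod (u - v) \<le> Bb * cmod (u' - v')"
proof -
  obtain a b c d where M: "gam p g x = (a,b,c,d)" by (cases "gam p g x") auto
  have eq: "cmod (u - v) = cmod (u' - v') * cmod (of_int c * u + of_int d) * cmod (of_int c * v + of_int d)"
    using moeb_diff[of a b c d u u' v v'] gam_SL[OF x] mu mv M by simp
  have b1: "cmod (of_int c * u + of_int d) \<le> Kb * (Rb + 1)" using lin_bound[OF x M Rb_bound[OF k u]] .
  have b2: "cmod (of_int c * v + of_int d) \<le> Kb * (Rb + 1)" using lin_bound[OF x M Rb_bound[OF l v]] .
  have "cmod (of_int c * u + of_int d) * cmod (of_int c * v + of_int d) \<le> (Kb * (Rb + 1))^2"
    unfolding power2_eq_square using b1 b2 Kb_nonneg Rb_nonneg by (intro mult_mono) auto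
  also have "\<dots> \<le> Bb" unfolding Bb_def by simp
  finally have "cmod (u' - v') * (cmod (of_int c * u + of_int d) * cmod (of_int c * v + of_int d)) \<le> cmod (u' - v') * Bb"
    by (intro mult_left_mono) auto
  thus ?thesis using eq by (simp add: algebra_simps)
qed


lemma L:
  assumes "red p w" "a \<in> {1..2*p}" "b \<in> {1..2*p}" "u \<in> closure (disc cen rad a)"
    "v \<in> closure (disc cen rad b)" "w \<noteq> [] \<Longrightarrow> last w \<noteq> a \<and> last w \<noteq> b"
  shows "\<exists>u' v'. word_act p g w (Some u) = Some u' \<and> word_act p g w (Some v) = Some v' \<and>
     cmod (u - v) \<le> Bb ^ length w * cmod (u' - v') \<and>
     (w \<noteq> [] \<longrightarrow> u' \<in> closure (disc cen rad (opp p (hd w))) \<and> v' \<in> closure (disc cen rad (opp p (hd w))))"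
  using assms(1,6)
proof (induction w)
  case Nil thus ?case by simp
next
  case (Cons x w)
  have rx: "x \<in> {1..2*p}" "red p w" "w \<noteq> [] \<Longrightarrow> hd w \<noteq> opp p x" using Cons.prems(1) red_Cons by auto
  have "w \<noteq> [] \<Longrightarrow> last w \<noteq> a \<and> last w \<noteq> b" using Cons.prems(2) by simp
  then obtain u1 v1 where h: "word_act p g w (Some u) = Some u1" "word_act p g w (Some v) = Some v1"
    "cmod (u - v) \<le> Bb ^ length w * cmod (u1 - v1)"
    "w \<noteq> [] \<longrightarrow> u1 \<in> closure (disc cen rad (opp p (hd w))) \<and> v1 \<in> closure (disc cen rad (opp p (hd w)))"
    using Cons.IH rx(2) by blast
  define ka where "ka = (if w = [] then a else opp p (hd w))"
  define kb where "kb = (if w = [] then b else opp p (hd w))"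
  have hdR: "w \<noteq> [] \<Longrightarrow> hd w \<in> {1..2*p}" using rx(2) unfolding red_def
    by (metis hd_conv_nth length_greater_0_conv)
  have nx: "w \<noteq> [] \<Longrightarrow> opp p (hd w) \<noteq> x" using rx(3) hdR opp_opp by metis
  have ka: "ka \<in> {1..2*p}" "ka \<noteq> x" "u1 \<in> closure (disc cen rad ka)"
    using assms(2,4) hdR opp_range nx Cons.prems(2) h(1,4) by (auto simp: ka_def)
  have kb: "kb \<in> {1..2*p}" "kb \<noteq> x" "v1 \<in> closure (disc cen rad kb)"
    using assms(3,5) hdR opp_range nx Cons.prems(2) h(2,4) by (auto simp: kb_def)
  obtain u2 where u2: "moeb (gam p g x) (Some u1) = Some u2" "u2 \<in> closure (disc cen rad (opp p x))"
    using step[OF rx(1) ka] by blast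
  obtain v2 where v2: "moeb (gam p g x) (Some v1) = Some v2" "v2 \<in> closure (disc cen rad (opp p x))"
    using step[OF rx(1) kb] by blast
  have d: "cmod (u1 - v1) \<le> Bb * cmod (u2 - v2)"
    using one_step_dist[OF rx(1) ka(1) kb(1) ka(3) kb(3) u2(1) v2(1)] .
  have "Bb ^ length w * cmod (u1 - v1) \<le> Bb ^ length w * (Bb * cmod (u2 - v2))"
    using d Bb_gt1 by (intro mult_left_mono) auto
  hence "cmod (u - v) \<le> Bb ^ length (x#w) * cmod (u2 - v2)" using h(3) by (simp add: algebra_simps)
  thus ?case using h(1,2) u2 v2 by auto
qed

definition "Pairs = {(i,k). i \<in> {1..2*p} \<and> k \<in> {1..2*p} \<and> i \<noteq> k}"
definition "dl = Min ((\<lambda>(i,k). setdist (closure (disc cen rad i)) (closure (disc cen rad k))) ` Pairs)"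

lemma Pairs_fin: "finite Pairs"
  by (rule finite_subset[of _ "{1..2*p} \<times> {1..2*p}"]) (auto simp: Pairs_def)

lemma dl_pos: "dl > 0"
proof -
  have p2: "p \<ge> 2" using S by (simp add: schottky_setup_def)
  hence "(1,2) \<in> Pairs" by (auto simp: Pairs_def)
  hence ne: "Pairs \<noteq> {}" by blast
  have "\<forall>(i,k)\<in>Pairs. setdist (closure (disc cen rad i)) (closure (disc cen rad k)) > 0"
  proof (clarify)
    fix i k assume "(i,k) \<in> Pairs"
    hence ik: "i \<in> {1..2*p}" "k \<in> {1..2*p}" "i \<noteq> k" by (auto simp: Pairs_def)
    have c: "compact (closure (disc cen rad i))" unfolding disc_def by (simp add: compact_closure)
    have cl: "closed (closure (disc cen rad k))" by simp
    have n1: "closure (disc cen rad i) \<noteq> {}" using rad_pos[OF ik(1)] closure_subset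
      unfolding disc_def by (metis centre_in_ball empty_iff subset_empty)
    have n2: "closure (disc cen rad k) \<noteq> {}" using rad_pos[OF ik(2)] closure_subset
      unfolding disc_def by (metis centre_in_ball empty_iff subset_empty)
    show "setdist (closure (disc cen rad i)) (closure (disc cen rad k)) > 0"
      using setdist_gt_0_compact_closed[OF c cl] disj[OF ik] n1 n2 by blast
  qed
  hence "\<forall>x\<in>(\<lambda>(i,k). setdist (closure (disc cen rad i)) (closure (disc cen rad k))) ` Pairs. x > 0"
    by fast
  moreover have "finite ((\<lambda>(i,k). setdist (closure (disc cen rad i)) (closure (disc cen rad k))) ` Pairs)"
    using Pairs_fin by simp
  moreover have "(\<lambda>(i,k). setdist (closure (disc cen rad i)) (closure (disc cen rad k))) ` Pairs \<noteq> {}"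
    using ne by simp
  ultimately show ?thesis unfolding dl_def by (simp add: Min_gr_iff)
qed

lemma dl_le: assumes "i \<in> {1..2*p}" "k \<in> {1..2*p}" "i \<noteq> k"
  "u \<in> closure (disc cen rad i)" "v \<in> closure (disc cen rad k)"
  shows "dl \<le> cmod (u - v)"
proof -
  have "(i,k) \<in> Pairs" using assms by (auto simp: Pairs_def)
  hence "dl \<le> setdist (closure (disc cen rad i)) (closure (disc cen rad k))"
    unfolding dl_def using Pairs_fin by (intro Min_le) auto
  also have "\<dots> \<le> dist u v" using assms(4,5) by (rule setdist_le_dist)
  finally show ?thesis by (simp add: dist_norm)
qed


end

lemma rr_props:
  assumes "length al = n" "length be = n" "al \<noteq> be"
  shows "rr al be < n \<and> take (rr al be) al = take (rr al be) be \<and> al ! rr al be \<noteq> be ! rr al be"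
proof -
  let ?S = "{i. i \<le> length al \<and> (\<forall>k<i. al ! k = be ! k)}"
  have fin: "finite ?S" by (rule finite_subset[of _ "{..length al}"]) auto
  have "0 \<in> ?S" by simp
  hence r: "rr al be \<in> ?S" unfolding rr_def using fin by (intro Max_in) auto
  have rn: "rr al be < n"
  proof (rule ccontr)
    assume "\<not> rr al be < n"
    hence "\<forall>k<n. al ! k = be ! k" using r assms by auto
    thus False using assms by (metis nth_equalityI)
  qed
  have tk: "take (rr al be) al = take (rr al be) be"
    using r rn assms by (intro nth_equalityI) auto
  have "al ! rr al be \<noteq> be ! rr al be"
  proof
    assume "al ! rr al be = be ! rr al be"
    hence "Suc (rr al be) \<in> ?S" using r rn assms by (auto simp: less_Suc_eq)
    hence "Suc (rr al be) \<le> rr al be" unfolding rr_def using fin by (intro Max_ge) auto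
    thus False by simp
  qed
  thus ?thesis using rn tk by blast
qed


context
  fixes p :: nat and g :: "nat \<Rightarrow> imat" and cen rad :: "nat \<Rightarrow> real"
  assumes S: "schottky_setup p g cen rad"
begin

lemma tail_part:
  assumes al: "al \<in> words_j p n j" and j: "j \<in> {1..2*p}" and z: "z \<in> disc cen rad j" and r: "r < n"
  shows "\<exists>u. word_act p g (drop r al) (Some z) = Some u \<and> u \<in> closure (disc cen rad (opp p (al ! r)))"
proof -
  have ra: "red p al" "length al = n" "al ! (n-1) \<noteq> j" using al words_red by (auto simp: words_j_def)
  have "red p (drop r al)" using red_append[of p "take r al" "drop r al"] ra by simp
  moreover have ne: "drop r al \<noteq> []" using r ra by simp
  moreover have "last (drop r al) = al ! (n-1)" using ne ra by (simp add: last_conv_nth)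
  moreover have "hd (drop r al) = al ! r" using r ra by (simp add: hd_drop_conv_nth)
  moreover have "z \<in> closure (disc cen rad j)" using z closure_subset by blast
  ultimately show ?thesis using L[OF S, of "drop r al" j j z z] j ra by auto
qed

lemma main: "\<exists>C::real. \<exists>\<theta>::real. C > 0 \<and> 0 < \<theta> \<and> \<theta> < 1 \<and>
    (\<forall>n\<ge>1. \<forall>j\<in>{1..2*p}. \<forall>z\<in>disc cen rad j.
       \<forall>al\<in>words_j p n j. \<forall>be\<in>words_j p n j. al \<noteq> be \<longrightarrow>
         cmod (the (word_act p g al (Some z)) - the (word_act p g be (Some z)))
           \<ge> C * \<theta> ^ rr al be)"
proof (intro exI conjI allI impI ballI)
  show "dl p cen rad > 0" using dl_pos[OF S] .
  have B1: "Bb p g cen rad > 1" using Bb_gt1[OF S] .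
  thus "0 < 1 / Bb p g cen rad" "1 / Bb p g cen rad < 1" by auto
  fix n j z al be
  assume j: "j \<in> {1..2*p}" and z: "z \<in> disc cen rad j" and al: "al \<in> words_j p n j"
    and be: "be \<in> words_j p n j" and ne: "al \<noteq> be"
  have ra: "red p al" "length al = n" using al words_red by (auto simp: words_j_def)
  have rb: "red p be" "length be = n" using be words_red by (auto simp: words_j_def)
  define r where "r = rr al be"
  have rp: "r < n" "take r al = take r be" "al ! r \<noteq> be ! r"
    using rr_props[OF ra(2) rb(2) ne] by (auto simp: r_def)
  obtain u1 where u1: "word_act p g (drop r al) (Some z) = Some u1" "u1 \<in> closure (disc cen rad (opp p (al ! r)))"
    using tail_part[OF al j z rp(1)] by blast
  obtain v1 where v1: "word_act p g (drop r be) (Some z) = Some v1" "v1 \<in> closure (disc cen rad (opp p (be ! r)))"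
    using tail_part[OF be j z rp(1)] by blast
  have alR: "al ! r \<in> {1..2*p}" using ra rp(1) by (simp add: red_def)
  have beR: "be ! r \<in> {1..2*p}" using rb rp(1) by (simp add: red_def)
  have oa: "opp p (al ! r) \<in> {1..2*p}" using opp_range[OF alR] .
  have ob: "opp p (be ! r) \<in> {1..2*p}" using opp_range[OF beR] .
  have oab: "opp p (al ! r) \<noteq> opp p (be ! r)" using opp_inj[OF alR beR] rp(3) by blast
  have d1: "dl p cen rad \<le> cmod (u1 - v1)" using dl_le[OF S oa ob oab u1(2) v1(2)] .
  define w where "w = take r al"
  have wr: "red p w" using red_append[of p "take r al" "drop r al"] ra by (simp add: w_def)
  have lw: "length w = r" using rp(1) ra by (simp add: w_def)
  have lst: "w \<noteq> [] \<Longrightarrow> last w \<noteq> opp p (al ! r) \<and> last w \<noteq> opp p (be ! r)"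
  proof -
    assume wn: "w \<noteq> []"
    hence r0: "r > 0" using lw by auto
    have la: "last w = al ! (r - 1)" using wn lw rp(1) ra by (simp add: w_def last_conv_nth)
    have lb: "last w = be ! (r - 1)" using wn lw rp(1) rb rp(2) by (simp add: w_def last_conv_nth)
    have "\<forall>i. Suc i < length al \<longrightarrow> al ! Suc i \<noteq> opp p (al ! i)" using ra(1) by (simp add: red_def)
    hence "Suc (r-1) < length al \<longrightarrow> al ! Suc (r-1) \<noteq> opp p (al ! (r-1))" by (rule spec)
    moreover have "Suc (r-1) = r" using r0 by simp
    ultimately have a1: "al ! r \<noteq> opp p (al ! (r-1))" using rp(1) ra(2) by metis
    have "\<forall>i. Suc i < length be \<longrightarrow> be ! Suc i \<noteq> opp p (be ! i)" using rb(1) by (simp add: red_def)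
    hence "Suc (r-1) < length be \<longrightarrow> be ! Suc (r-1) \<noteq> opp p (be ! (r-1))" by (rule spec)
    moreover have "Suc (r-1) = r" using r0 by simp
    ultimately have b1: "be ! r \<noteq> opp p (be ! (r-1))" using rp(1) rb(2) by metis
    have c1: "last w \<noteq> opp p (al ! r)"
    proof
      assume "last w = opp p (al ! r)"
      hence "opp p (al ! (r-1)) = al ! r" using la opp_opp[OF alR] by simp
      thus False using a1 by simp
    qed
    have c2: "last w \<noteq> opp p (be ! r)"
    proof
      assume "last w = opp p (be ! r)"
      hence "opp p (be ! (r-1)) = be ! r" using lb opp_opp[OF beR] by simp
      thus False using b1 by simp
    qed
    show ?thesis using c1 c2 by blast
  qed
  obtain u2 v2 where h: "word_act p g w (Some u1) = Some u2" "word_act p g w (Some v1) = Some v2"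
    "cmod (u1 - v1) \<le> Bb p g cen rad ^ length w * cmod (u2 - v2)"
    using L[OF S wr oa ob u1(2) v1(2) lst] by blast
  have eal: "al = w @ drop r al" by (simp add: w_def)
  have ebe: "be = w @ drop r be" unfolding w_def rp(2) by simp
  have A: "word_act p g al (Some z) = Some u2" using h(1) u1(1) by (subst eal) (simp add: word_act_append)
  have B: "word_act p g be (Some z) = Some v2" using h(2) v1(1) by (subst ebe) (simp add: word_act_append)
  have pos: "Bb p g cen rad ^ r > 0" using B1 by simp
  have "dl p cen rad \<le> Bb p g cen rad ^ r * cmod (u2 - v2)" using d1 h(3) lw by simp
  hence "dl p cen rad / Bb p g cen rad ^ r \<le> cmod (u2 - v2)" using pos by (simp add: divide_le_eq mult.commute)
  thus "dl p cen rad * (1 / Bb p g cen rad) ^ rr al be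
      \<le> cmod (the (word_act p g al (Some z)) - the (word_act p g be (Some z)))"
    using A B by (simp add: r_def power_one_over)
qed

end

theorem lemma4p4:
  fixes p :: nat and g :: "nat \<Rightarrow> imat" and cen rad :: "nat \<Rightarrow> real"
  assumes "schottky_setup p g cen rad"
  shows "\<exists>C::real. \<exists>\<theta>::real. C > 0 \<and> 0 < \<theta> \<and> \<theta> < 1 \<and>
    (\<forall>n\<ge>1. \<forall>j\<in>{1..2*p}. \<forall>z\<in>disc cen rad j.
       \<forall>al\<in>words_j p n j. \<forall>be\<in>words_j p n j. al \<noteq> be \<longrightarrow>
         cmod (the (word_act p g al (Some z)) - the (word_act p g be (Some z)))
           \<ge> C * \<theta> ^ rr al be)"
  using main[OF assms] .

end
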